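(* Let $X\subset\mathbb CP(n)$ be an algebraic subset defined as the common zero set of $k$ homogeneous polynomials in $\mathbb C^{n+1}$. Then $M=\mathbb CP(n)\setminus X$ admits an $\ell$-strictly plurisubharmonic exhaustion, where $\ell=n-k+1$. In particular, if $X$ is an algebraic hypersurface then $\mathbb CP(n)\setminus X$ is a Stein manifold.
   Context: For a $C^2$ function $f\colon M\to\mathbb R$ on a complex manifold, the Levi form $L_f(p)$ is the Hermitian quadratic form on $T_pM$ given in local coordinates by $\sum_{i,j}\frac{\partial^2 f}{\partial z_i\partial\bar z_j}(p)\,w_i\bar w_j$. $f$ is $\ell$-strictly plurisubharmonic if for every $p\in M$ there is a complex subspace $E\subset T_pM$ of dimension $\ell$ with $L_f(p)(v)>0$ for all $v\in E\setminus\{0\}$. An exhaustion of $M$ is a continuous function $g\colon M\to\mathbb R$ bounded from below and proper (i.e. $g(p_n)\to+\infty$ for every sequence $p_n$ without accumulation point in $M$). A Stein manifold is a complex manifold admitting a $C^\infty$ strictly plurisubharmonic (i.e. $(\dim M)$-strictly plurisubharmonic) exhaustion. *)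

theory Defs
  imports "HOL-Analysis.Analysis"
begin

text \<open>Complex projective space CP(n) is modelled through homogeneous coordinates:
  points of C^{n+1} are vectors of type complex^'m with CARD('m) = n+1, and
  real functions on open subsets of CP(n) are modelled by their lifts to the
  corresponding C^*-invariant cones in C^{n+1}.\<close>

fun Ck :: "nat \<Rightarrow> 'a::euclidean_space set \<Rightarrow> ('a \<Rightarrow> real) \<Rightarrow> bool" where
  "Ck 0 S f = continuous_on S f"
| "Ck (Suc k) S f = (f differentiable_on S \<and>
      (\<forall>b\<in>Basis. Ck k S (\<lambda>x. frechet_derivative f (at x) b)))"

definition smooth_fun :: "'a::euclidean_space set \<Rightarrow> ('a \<Rightarrow> real) \<Rightarrow> bool" where
  "smooth_fun S f = (\<forall>k. Ck k S f)"

definition dderiv :: "('a::real_normed_vector \<Rightarrow> real) \<Rightarrow> 'a \<Rightarrow> 'a \<Rightarrow> real" where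
  "dderiv f v x = frechet_derivative f (at x) v"

text \<open>Second Wirtinger derivative d^2 f / (dz_i d(conj z_j)) at x, where
  z_i = x_i + i y_i, written via real partial derivatives.\<close>
definition wirt2 :: "(complex^'m \<Rightarrow> real) \<Rightarrow> 'm \<Rightarrow> 'm \<Rightarrow> complex^'m \<Rightarrow> complex" where
  "wirt2 f i j x =
     (complex_of_real (dderiv (dderiv f (axis j 1)) (axis i 1) x
                     + dderiv (dderiv f (axis j \<i>)) (axis i \<i>) x)
      + \<i> * complex_of_real (dderiv (dderiv f (axis j \<i>)) (axis i 1) x
                     - dderiv (dderiv f (axis j 1)) (axis i \<i>) x)) / 4"

text \<open>Levi form of f at x evaluated at w (a real number, returned as complex).\<close>
definition levi_form :: "(complex^'m \<Rightarrow> real) \<Rightarrow> complex^'m \<Rightarrow> complex^'m \<Rightarrow> complex" where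
  "levi_form f x w = (\<Sum>i\<in>UNIV. \<Sum>j\<in>UNIV. wirt2 f i j x * w$i * cnj (w$j))"

definition homog_poly :: "nat \<Rightarrow> (complex^'m \<Rightarrow> complex) \<Rightarrow> bool" where
  "homog_poly d p = (\<exists>c :: ('m \<Rightarrow> nat) \<Rightarrow> complex.
     \<forall>z. p z = (\<Sum>\<alpha>\<in>{\<alpha>::'m\<Rightarrow>nat. (\<Sum>i\<in>UNIV. \<alpha> i) = d}. c \<alpha> * (\<Prod>i\<in>UNIV. (z$i) ^ \<alpha> i)))"

text \<open>Cone over CP(n) \ X, X = common zero set of P 0, ..., P (k-1).\<close>
definition compl_cone :: "nat \<Rightarrow> (nat \<Rightarrow> complex^'m \<Rightarrow> complex) \<Rightarrow> (complex^'m) set" where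
  "compl_cone k P = {z. z \<noteq> 0 \<and> \<not> (\<forall>i<k. P i z = 0)}"

text \<open>f (lifted to the C^*-invariant cone U) is a function on the projectivization of U.\<close>
definition proj_invariant :: "(complex^'m) set \<Rightarrow> (complex^'m \<Rightarrow> real) \<Rightarrow> bool" where
  "proj_invariant U f = (\<forall>z\<in>U. \<forall>c::complex. c \<noteq> 0 \<longrightarrow> f (c *s z) = f z)"

text \<open>l-strict plurisubharmonicity on the projectivization of U, via the lift:
  the Levi form of the lift is the pullback of the Levi form on CP(n) under
  the projection, whose kernel is the line C z.\<close>
definition strictly_psh :: "nat \<Rightarrow> (complex^'m) set \<Rightarrow> (complex^'m \<Rightarrow> real) \<Rightarrow> bool" where
  "strictly_psh l U f = (\<forall>z\<in>U. \<exists>E. vec.subspace E \<and> vec.dim E = l \<and>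
      (\<forall>v\<in>E. v \<noteq> 0 \<longrightarrow> Re (levi_form f z v) > 0))"

text \<open>A sequence in P(U) has no accumulation point in P(U) iff its unit-norm
  representatives have no convergent subsequence with limit in U.\<close>
definition proj_exhaustion :: "(complex^'m) set \<Rightarrow> (complex^'m \<Rightarrow> real) \<Rightarrow> bool" where
  "proj_exhaustion U f = (continuous_on U f \<and> (\<exists>b. \<forall>z\<in>U. b \<le> f z) \<and>
     (\<forall>s::nat \<Rightarrow> complex^'m. (\<forall>n. s n \<in> U \<and> norm (s n) = 1) \<longrightarrow>
        \<not> (\<exists>w\<in>U. \<exists>r. strict_mono r \<and> (s \<circ> r) \<longlonglongrightarrow> w) \<longrightarrow>
        filterlim (\<lambda>n. f (s n)) at_top sequentially))"

end

theory Submission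
  imports Defs "HOL-Complex_Analysis.Cauchy_Integral_Formula"
begin


inductive_set RC :: "'a::euclidean_space set \<Rightarrow> ('a \<Rightarrow> real) set" for S where
  RC_const: "(\<lambda>x. c) \<in> RC S"
| RC_coord: "(\<lambda>x. x \<bullet> b) \<in> RC S"
| RC_add: "f \<in> RC S \<Longrightarrow> g \<in> RC S \<Longrightarrow> (\<lambda>x. f x + g x) \<in> RC S"
| RC_mult: "f \<in> RC S \<Longrightarrow> g \<in> RC S \<Longrightarrow> (\<lambda>x. f x * g x) \<in> RC S"
| RC_inv: "f \<in> RC S \<Longrightarrow> (\<forall>x\<in>S. f x \<noteq> 0) \<Longrightarrow> (\<lambda>x. inverse (f x)) \<in> RC S"
| RC_ln: "f \<in> RC S \<Longrightarrow> (\<forall>x\<in>S. f x > 0) \<Longrightarrow> (\<lambda>x. ln (f x)) \<in> RC S"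

lemma RC_neg: "f \<in> RC S \<Longrightarrow> (\<lambda>x. - f x) \<in> RC S"
  using RC_mult[OF RC_const[of "-1"], of f] by simp

lemma RC_diff: "f \<in> RC S \<Longrightarrow> g \<in> RC S \<Longrightarrow> (\<lambda>x. f x - g x) \<in> RC S"
  using RC_add[OF _ RC_neg, of f S g] by simp

lemma RC_sum: "finite I \<Longrightarrow> (\<And>i. i \<in> I \<Longrightarrow> g i \<in> RC S) \<Longrightarrow> (\<lambda>x. \<Sum>i\<in>I. g i x) \<in> RC S"
proof (induction I rule: finite_induct)
  case empty
  then show ?case using RC_const[of 0] by simp
next
  case (insert a F)
  then show ?case using RC_add[of "g a" S "\<lambda>x. \<Sum>i\<in>F. g i x"] by simp
qed

lemma RC_deriv:
  assumes "f \<in> RC S"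
  shows "\<exists>f'. (\<forall>x\<in>S. (f has_derivative f' x) (at x)) \<and> (\<forall>u. (\<lambda>x. f' x u) \<in> RC S)"
  using assms
proof (induction rule: RC.induct)
  case (RC_const c)
  show ?case by (rule exI[of _ "\<lambda>x h. 0"]) (auto intro: RC.RC_const)
next
  case (RC_coord b)
  show ?case by (rule exI[of _ "\<lambda>x h. h \<bullet> b"]) (auto intro!: RC.RC_const derivative_eq_intros)
next
  case (RC_add f g)
  then obtain f' g' where f: "\<forall>x\<in>S. (f has_derivative f' x) (at x)" "\<forall>u. (\<lambda>x. f' x u) \<in> RC S"
    and g: "\<forall>x\<in>S. (g has_derivative g' x) (at x)" "\<forall>u. (\<lambda>x. g' x u) \<in> RC S" by blast
  show ?case by (rule exI[of _ "\<lambda>x h. f' x h + g' x h"]) (use f g in \<open>auto intro!: RC.RC_add derivative_eq_intros\<close>)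
next
  case (RC_mult f g)
  then obtain f' g' where f: "\<forall>x\<in>S. (f has_derivative f' x) (at x)" "\<forall>u. (\<lambda>x. f' x u) \<in> RC S"
    and g: "\<forall>x\<in>S. (g has_derivative g' x) (at x)" "\<forall>u. (\<lambda>x. g' x u) \<in> RC S" by blast
  show ?case by (rule exI[of _ "\<lambda>x h. f x * g' x h + f' x h * g x"])
     (use f g RC_mult.hyps in \<open>auto intro!: RC.RC_add RC.RC_mult has_derivative_mult\<close>)
next
  case (RC_inv f)
  then obtain f' where f: "\<forall>x\<in>S. (f has_derivative f' x) (at x)" "\<forall>u. (\<lambda>x. f' x u) \<in> RC S" by blast
  show ?case
  proof (rule exI[of _ "\<lambda>x h. - (inverse (f x) * f' x h * inverse (f x))"], intro conjI ballI allI)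
    fix x assume "x \<in> S" then show "((\<lambda>x. inverse (f x)) has_derivative (\<lambda>h. - (inverse (f x) * f' x h * inverse (f x)))) (at x)"
      using f RC_inv by (auto intro!: has_derivative_inverse)
  next
    fix u show "(\<lambda>x. - (inverse (f x) * f' x u * inverse (f x))) \<in> RC S"
      using f RC_inv by (auto intro!: RC_neg RC.RC_mult RC.RC_inv)
  qed
next
  case (RC_ln f)
  then obtain f' where f: "\<forall>x\<in>S. (f has_derivative f' x) (at x)" "\<forall>u. (\<lambda>x. f' x u) \<in> RC S" by blast
  show ?case
  proof (rule exI[of _ "\<lambda>x h. f' x h * inverse (f x)"], intro conjI ballI allI)
    fix x assume "x \<in> S" then show "((\<lambda>x. ln (f x)) has_derivative (\<lambda>h. f' x h * inverse (f x))) (at x)"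
      using f RC_ln by (auto intro!: has_derivative_ln)
  next
    fix u show "(\<lambda>x. f' x u * inverse (f x)) \<in> RC S"
      using f RC_ln by (auto intro!: RC.RC_mult RC.RC_inv)
  qed
qed

lemma RC_Ck:
  assumes "open S"
  shows "\<forall>f. (\<exists>g\<in>RC S. \<forall>x\<in>S. f x = g x) \<longrightarrow> Ck k S f"
proof (induction k)
  case 0
  show ?case
  proof (intro allI impI)
    fix f assume "\<exists>g\<in>RC S. \<forall>x\<in>S. f x = g x"
    then obtain g where g: "g \<in> RC S" "\<forall>x\<in>S. f x = g x" by blast
    obtain g' where "\<forall>x\<in>S. (g has_derivative g' x) (at x)" using RC_deriv[OF g(1)] by blast
    then have "continuous_on S g"
      by (intro continuous_at_imp_continuous_on ballI) (blast intro: has_derivative_continuous)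
    then show "Ck 0 S f" using g(2) continuous_on_cong[of S S f g] by simp
  qed
next
  case (Suc k)
  show ?case
  proof (intro allI impI)
    fix f assume "\<exists>g\<in>RC S. \<forall>x\<in>S. f x = g x"
    then obtain g where g: "g \<in> RC S" "\<forall>x\<in>S. f x = g x" by blast
    obtain g' where g': "\<forall>x\<in>S. (g has_derivative g' x) (at x)" "\<forall>u. (\<lambda>x. g' x u) \<in> RC S"
      using RC_deriv[OF g(1)] by blast
    have gf: "\<And>y. y \<in> S \<Longrightarrow> g y = f y" using g(2) by simp
    have fd: "(f has_derivative g' x) (at x)" if "x \<in> S" for x
      by (rule has_derivative_transform_within_open[OF g'(1)[rule_format, OF that] assms that gf])
    have "f differentiable_on S"
      unfolding differentiable_on_def differentiable_def using fd has_derivative_at_withinI by blast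
    moreover have "Ck k S (\<lambda>x. frechet_derivative f (at x) b)" for b
    proof -
      have "\<forall>x\<in>S. frechet_derivative f (at x) b = g' x b"
      proof
        fix x assume "x \<in> S"
        show "frechet_derivative f (at x) b = g' x b" using frechet_derivative_at[OF fd[OF \<open>x \<in> S\<close>]] by simp
      qed
      then have ex: "\<exists>h\<in>RC S. \<forall>x\<in>S. frechet_derivative f (at x) b = h x"
        using g'(2) by (intro bexI[of _ "\<lambda>x. g' x b"]) auto
      show ?thesis by (rule Suc[rule_format, OF ex])
    qed
    ultimately show "Ck (Suc k) S f" by (simp only: Ck.simps) blast
  qed
qed

lemma RC_smooth: "open S \<Longrightarrow> f \<in> RC S \<Longrightarrow> smooth_fun S f"
  unfolding smooth_fun_def using RC_Ck by blast



inductive_set CP :: "(complex^'m \<Rightarrow> complex) set" where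
  CP_const: "(\<lambda>x. c) \<in> CP"
| CP_coord: "(\<lambda>x. x $ j) \<in> CP"
| CP_add: "p \<in> CP \<Longrightarrow> q \<in> CP \<Longrightarrow> (\<lambda>x. p x + q x) \<in> CP"
| CP_mult: "p \<in> CP \<Longrightarrow> q \<in> CP \<Longrightarrow> (\<lambda>x. p x * q x) \<in> CP"

lemma CP_sum: "finite I \<Longrightarrow> (\<And>i. i \<in> I \<Longrightarrow> g i \<in> CP) \<Longrightarrow> (\<lambda>x. \<Sum>i\<in>I. g i x) \<in> CP"
proof (induction I rule: finite_induct)
  case empty
  then show ?case using CP_const[of 0] by simp
next
  case (insert a F)
  then show ?case using CP_add[of "g a" "\<lambda>x. \<Sum>i\<in>F. g i x"] by simp
qed

lemma CP_prod: "finite I \<Longrightarrow> (\<And>i. i \<in> I \<Longrightarrow> g i \<in> CP) \<Longrightarrow> (\<lambda>x. \<Prod>i\<in>I. g i x) \<in> CP"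
proof (induction I rule: finite_induct)
  case empty
  then show ?case using CP_const[of 1] by simp
next
  case (insert a F)
  then show ?case using CP_mult[of "g a" "\<lambda>x. \<Prod>i\<in>F. g i x"] by simp
qed

lemma CP_power: "p \<in> CP \<Longrightarrow> (\<lambda>x. p x ^ n) \<in> CP"
proof (induction n)
  case 0 then show ?case using CP_const[of 1] by simp
next
  case (Suc n) then show ?case using CP_mult[of p "\<lambda>x. p x ^ n"] by simp
qed

lemma RC_power: "f \<in> RC S \<Longrightarrow> (\<lambda>x. f x ^ n) \<in> RC S"
proof (induction n)
  case 0 then show ?case using RC_const[of 1] by simp
next
  case (Suc n) then show ?case using RC_mult[of f S "\<lambda>x. f x ^ n"] by simp
qed

lemma CP_ReIm: "p \<in> CP \<Longrightarrow> (\<lambda>x. Re (p x)) \<in> RC S \<and> (\<lambda>x. Im (p x)) \<in> RC S"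
proof (induction rule: CP.induct)
  case (CP_const c)
  then show ?case using RC_const by auto
next
  case (CP_coord j)
  have "(\<lambda>x::complex^'a. x \<bullet> axis j 1) \<in> RC S" "(\<lambda>x::complex^'a. x \<bullet> axis j \<i>) \<in> RC S"
    by (rule RC_coord)+
  then show ?case by (simp add: inner_axis)
next
  case (CP_add p q)
  then show ?case using RC_add[of "\<lambda>x. Re (p x)" S "\<lambda>x. Re (q x)"] RC_add[of "\<lambda>x. Im (p x)" S "\<lambda>x. Im (q x)"] by simp
next
  case (CP_mult p q)
  then show ?case
    using RC_diff[OF RC_mult[of "\<lambda>x. Re (p x)" S "\<lambda>x. Re (q x)"] RC_mult[of "\<lambda>x. Im (p x)" S "\<lambda>x. Im (q x)"]]
      RC_add[OF RC_mult[of "\<lambda>x. Re (p x)" S "\<lambda>x. Im (q x)"] RC_mult[of "\<lambda>x. Im (p x)" S "\<lambda>x. Re (q x)"]]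
    by simp
qed

lemma CP_cont: "p \<in> CP \<Longrightarrow> continuous_on UNIV p"
  by (induction rule: CP.induct) (auto intro!: continuous_intros)

lemma CP_deriv: "p \<in> CP \<Longrightarrow> \<exists>L. (p has_derivative L) (at z) \<and> (\<forall>c h. L (c *s h) = c * L h)"
proof (induction rule: CP.induct)
  case (CP_const c)
  show ?case by (rule exI[of _ "\<lambda>h. 0"]) auto
next
  case (CP_coord j)
  show ?case by (rule exI[of _ "\<lambda>h. h $ j"]) (auto intro: bounded_linear_imp_has_derivative)
next
  case (CP_add p q)
  then obtain L1 L2 where "(p has_derivative L1) (at z)" "\<forall>c h. L1 (c *s h) = c * L1 h"
    "(q has_derivative L2) (at z)" "\<forall>c h. L2 (c *s h) = c * L2 h" by blast
  then show ?case by (intro exI[of _ "\<lambda>h. L1 h + L2 h"]) (auto intro!: derivative_eq_intros simp: algebra_simps)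
next
  case (CP_mult p q)
  then obtain L1 L2 where "(p has_derivative L1) (at z)" "\<forall>c h. L1 (c *s h) = c * L1 h"
    "(q has_derivative L2) (at z)" "\<forall>c h. L2 (c *s h) = c * L2 h" by blast
  then show ?case by (intro exI[of _ "\<lambda>h. p z * L2 h + L1 h * q z"] conjI has_derivative_mult) (auto simp: algebra_simps)
qed

lemma CP_line_holo: "p \<in> CP \<Longrightarrow> (\<lambda>t. p (z + t *s u)) holomorphic_on UNIV"
  by (induction rule: CP.induct) (auto intro!: holomorphic_intros)

lemma homog_CP:
  assumes "homog_poly d p"
  shows "p \<in> CP" "p (c *s z) = c ^ d * p z"
proof -
  obtain co where co: "\<And>z. p z = (\<Sum>\<alpha>\<in>{\<alpha>::'a\<Rightarrow>nat. (\<Sum>i\<in>UNIV. \<alpha> i) = d}. co \<alpha> * (\<Prod>i\<in>UNIV. (z$i) ^ \<alpha> i))"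
    using assms unfolding homog_poly_def by blast
  have "(\<lambda>z. (\<Sum>\<alpha>\<in>{\<alpha>::'a\<Rightarrow>nat. (\<Sum>i\<in>UNIV. \<alpha> i) = d}. co \<alpha> * (\<Prod>i\<in>UNIV. (z$i) ^ \<alpha> i))) \<in> CP"
  proof (cases "finite {\<alpha>::'a\<Rightarrow>nat. (\<Sum>i\<in>UNIV. \<alpha> i) = d}")
    case True
    show ?thesis
      by (rule CP_sum[OF True]) (auto intro!: CP_mult CP_const CP_prod CP_power CP_coord)
  next
    case False
    then show ?thesis using CP_const[of 0] by simp
  qed
  then show "p \<in> CP" using co by (metis (no_types, lifting) ext)
  have "(\<Prod>i\<in>UNIV. ((c *s z)$i) ^ \<alpha> i) = c ^ d * (\<Prod>i\<in>UNIV. (z$i) ^ \<alpha> i)"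
    if "(\<Sum>i\<in>UNIV. \<alpha> i) = d" for \<alpha> :: "'a \<Rightarrow> nat"
    by (simp add: power_mult_distrib prod.distrib power_sum[symmetric] that)
  then show "p (c *s z) = c ^ d * p z"
    unfolding co by (simp add: sum_distrib_left mult.left_commute)
qed



lemma norm_smult_vec: "norm (c *s (z::complex^'m)) = cmod c * norm z"
  unfolding norm_vec_def by (simp add: norm_mult L2_set_right_distrib)

locale cone_setup =
  fixes P :: "nat \<Rightarrow> complex^'m \<Rightarrow> complex" and d :: "nat \<Rightarrow> nat" and k :: nat
  assumes hyp: "\<And>i. i < k \<Longrightarrow> d i \<ge> 1 \<and> homog_poly (d i) (P i)"
begin

definition "DD = (\<Prod>i<k. d i)"
definition "Q i x = (P i x) ^ (DD div d i)"
definition "U = compl_cone k P"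
definition "N x = (\<Sum>b\<in>Basis. (x \<bullet> b) * (x \<bullet> b))"
definition "S x = (\<Sum>i<k. (cmod (Q i x))\<^sup>2)"
definition "F x = real DD * ln (N x) - ln (S x)"

lemma N_norm: "N x = (norm x)\<^sup>2"
  unfolding N_def power2_norm_eq_inner euclidean_inner[of x x] ..

lemma DD_pos: "DD \<ge> 1"
  unfolding DD_def using hyp by (simp add: Suc_le_eq prod_pos)

lemma dvd_DD: "i < k \<Longrightarrow> d i dvd DD"
  unfolding DD_def by (simp add: dvd_prodI)

lemma Q_CP: "i < k \<Longrightarrow> Q i \<in> CP"
  unfolding Q_def[abs_def] using hyp homog_CP(1) CP_power by blast

lemma Q_homog: "i < k \<Longrightarrow> Q i (c *s z) = c ^ DD * Q i z"
proof -
  assume i: "i < k"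
  have "Q i (c *s z) = (c ^ d i * P i z) ^ (DD div d i)"
    unfolding Q_def using homog_CP(2) hyp[OF i] by metis
  also have "\<dots> = c ^ (d i * (DD div d i)) * Q i z"
    unfolding Q_def by (simp add: power_mult_distrib power_mult)
  also have "d i * (DD div d i) = DD" using dvd_DD[OF i] by simp
  finally show ?thesis .
qed

lemma Q_nz_iff: "i < k \<Longrightarrow> Q i z \<noteq> 0 \<longleftrightarrow> P i z \<noteq> 0"
proof -
  assume i: "i < k"
  have "DD div d i > 0" using dvd_DD[OF i] DD_pos hyp[OF i]
    by (metis div_greater_zero_iff dvd_imp_le not_one_le_zero zero_less_iff_neq_zero)
  then show ?thesis unfolding Q_def by simp
qed

lemma U_iff: "z \<in> U \<longleftrightarrow> z \<noteq> 0 \<and> (\<exists>i<k. Q i z \<noteq> 0)"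
  unfolding U_def compl_cone_def using Q_nz_iff by auto

lemma S_pos_iff: "S z > 0 \<longleftrightarrow> (\<exists>i<k. Q i z \<noteq> 0)"
proof
  assume Sz: "S z > 0"
  show "\<exists>i<k. Q i z \<noteq> 0"
  proof (rule ccontr)
    assume "\<not> (\<exists>i<k. Q i z \<noteq> 0)"
    then have "S z = 0" unfolding S_def by simp
    then show False using Sz by simp
  qed
next
  assume "\<exists>i<k. Q i z \<noteq> 0"
  then obtain i where "i < k" "Q i z \<noteq> 0" by blast
  then have "(cmod (Q i z))\<^sup>2 > 0" by simp
  moreover have "(cmod (Q i z))\<^sup>2 \<le> S z" unfolding S_def
    using \<open>i < k\<close> by (intro member_le_sum) auto
  ultimately show "S z > 0" by linarith
qed

lemma S_cont: "continuous_on UNIV S"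
proof -
  have "\<And>i. i < k \<Longrightarrow> continuous_on UNIV (Q i)" using Q_CP CP_cont by blast
  then show ?thesis unfolding S_def[abs_def] by (intro continuous_intros) auto
qed

lemma U_open: "open U"
proof -
  have Ueq: "U = (-{0}) \<inter> (\<Union>i<k. {z. Q i z \<noteq> 0})" using U_iff by auto
  have oi: "open {z. Q i z \<noteq> 0}" if "i < k" for i
  proof -
    have "continuous_on UNIV (Q i)" using Q_CP CP_cont that by blast
    then show ?thesis using open_Collect_neq[of "Q i" "\<lambda>_. 0"] by (simp add: continuous_on_eq_continuous_at)
  qed
  have o1: "open (-{0::complex^'m})" by (simp add: open_Compl)
  have o2: "open (\<Union>i<k. {z. Q i z \<noteq> 0})" by (rule open_UN) (use oi in blast)
  show ?thesis unfolding Ueq by (rule open_Int[OF o1 o2])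
qed

lemma N_pos: "z \<in> U \<Longrightarrow> N z > 0" unfolding N_norm using U_iff by auto
lemma S_pos: "z \<in> U \<Longrightarrow> S z > 0" using U_iff S_pos_iff by auto

lemma F_RC: "F \<in> RC U"
proof -
  have N: "N \<in> RC U" unfolding N_def[abs_def]
    by (intro RC_sum) (auto intro: RC_mult RC_coord)
  have "(\<lambda>x. (cmod (Q i x))\<^sup>2) \<in> RC U" if "i < k" for i
  proof -
    have "(\<lambda>x. Re (Q i x) ^ 2 + Im (Q i x) ^ 2) \<in> RC U"
      using CP_ReIm[OF Q_CP[OF that]] by (intro RC_add RC_power) auto
    then show ?thesis by (simp add: cmod_power2)
  qed
  then have S: "S \<in> RC U" unfolding S_def[abs_def] by (intro RC_sum) auto
  show ?thesis unfolding F_def[abs_def]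
    by (intro RC_diff RC_mult RC_const RC_ln N S) (auto simp: N_pos S_pos)
qed

lemma N_smult: "N (c *s z) = (cmod c)\<^sup>2 * N z"
  by (simp add: N_norm norm_smult_vec power_mult_distrib)

lemma S_smult: "S (c *s z) = (cmod c) ^ (2 * DD) * S z"
proof -
  have e: "(cmod c ^ DD)\<^sup>2 = cmod c ^ (2 * DD)"
    by (metis power_mult mult.commute)
  have "(cmod (Q i (c *s z)))\<^sup>2 = cmod c ^ (2 * DD) * (cmod (Q i z))\<^sup>2" if "i < k" for i
    unfolding Q_homog[OF that] norm_mult norm_power power_mult_distrib e ..
  then show ?thesis unfolding S_def sum_distrib_left by (intro sum.cong) auto
qed

lemma U_smult: "z \<in> U \<Longrightarrow> c \<noteq> 0 \<Longrightarrow> c *s z \<in> U"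
  unfolding U_iff by (auto simp: Q_homog vec_eq_iff)

lemma F_smult: "z \<in> U \<Longrightarrow> c \<noteq> 0 \<Longrightarrow> F (c *s z) = F z"
proof -
  assume z: "z \<in> U" and c: "c \<noteq> 0"
  have "ln (N (c *s z)) = ln ((cmod c)\<^sup>2) + ln (N z)"
    unfolding N_smult using N_pos[OF z] c by (simp add: ln_mult)
  moreover have "ln (S (c *s z)) = real DD * ln ((cmod c)\<^sup>2) + ln (S z)"
  proof -
    have "cmod c ^ (2 * DD) = ((cmod c)\<^sup>2) ^ DD" by (simp add: power_mult)
    moreover have "(cmod c)\<^sup>2 > 0" using c by simp
    ultimately have "ln (cmod c ^ (2 * DD)) = real DD * ln ((cmod c)\<^sup>2)" by (simp add: ln_realpow)
    moreover have "cmod c ^ (2 * DD) > 0" using c by simp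
    moreover have "ln (cmod c ^ (2 * DD) * S z) = ln (cmod c ^ (2 * DD)) + ln (S z)"
      using S_pos[OF z] c by (simp add: ln_mult)
    ultimately show ?thesis unfolding S_smult by simp
  qed
  ultimately show ?thesis unfolding F_def by (simp add: algebra_simps)
qed

lemma F_proj_inv: "proj_invariant U F"
  unfolding proj_invariant_def using F_smult by blast

lemma F_unit: "z \<in> U \<Longrightarrow> F z = F (sgn z)"
proof -
  assume z: "z \<in> U"
  have "sgn z = complex_of_real (inverse (norm z)) *s z"
    unfolding vec_eq_iff sgn_vec_def vector_scaleR_component vector_smult_component by (simp add: scaleR_conv_of_real)
  moreover have "complex_of_real (inverse (norm z)) \<noteq> 0" using z U_iff by auto
  ultimately show ?thesis using F_smult z by simp
qed

lemma F_on_sphere: "norm z = 1 \<Longrightarrow> F z = - ln (S z)"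
  unfolding F_def N_norm by simp

lemma F_exhaustion
: "proj_exhaustion U F"
proof -
  have cont: "continuous_on U F" using RC_Ck[OF U_open, of 0] F_RC by auto
  have "compact (S ` sphere 0 1)"
    using compact_continuous_image[OF continuous_on_subset[OF S_cont] compact_sphere] by blast
  then obtain M where "\<forall>x\<in>S ` sphere 0 1. \<bar>x\<bar> \<le> M"
    using compact_imp_bounded bounded_real by metis
  then have M: "\<And>z. norm z = 1 \<Longrightarrow> S z \<le> M" by (fastforce dest: abs_le_D1)
  have below: "\<forall>z\<in>U. - ln (max M 1) \<le> F z"
  proof
    fix z assume z: "z \<in> U"
    have sz: "norm (sgn z) = 1" using z U_iff by (simp add: norm_sgn)
    have su: "sgn z \<in> U"
    proof -
      have "sgn z = complex_of_real (inverse (norm z)) *s z"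
        unfolding vec_eq_iff sgn_vec_def vector_scaleR_component vector_smult_component by (simp add: scaleR_conv_of_real)
      then show ?thesis using U_smult z U_iff by auto
    qed
    have "S (sgn z) \<le> max M 1" using M[OF sz] by simp
    then have "ln (S (sgn z)) \<le> ln (max M 1)" using S_pos[OF su] by simp
    then show "- ln (max M 1) \<le> F z" using F_unit[OF z] F_on_sphere[OF sz] by simp
  qed
  have proper: "filterlim (\<lambda>n. F (s n)) at_top sequentially"
    if s: "\<forall>n. s n \<in> U \<and> norm (s n) = 1" and nacc: "\<not> (\<exists>w\<in>U. \<exists>r. strict_mono r \<and> (s \<circ> r) \<longlonglongrightarrow> w)" for s
    unfolding filterlim_at_top
  proof (intro allI, rule ccontr)
    fix B :: real
    assume "\<not> eventually (\<lambda>n. B \<le> F (s n)) sequentially"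
    then have "\<forall>N. \<exists>n\<ge>N. F (s n) < B"
      unfolding eventually_sequentially by (meson not_le)
    then have "infinite {n. F (s n) < B}"
      by (simp add: infinite_nat_iff_unbounded_le)
    then obtain r1 :: "nat \<Rightarrow> nat" where r1: "strict_mono r1" "\<And>n. F (s (r1 n)) < B"
      using infinite_enumerate by blast
    have "\<forall>n. (s \<circ> r1) n \<in> sphere 0 1" using s by simp
    then obtain w r2 where w: "w \<in> sphere 0 1" "strict_mono r2" "((s \<circ> r1) \<circ> r2) \<longlonglongrightarrow> w"
      using compact_sphere[of "0::complex^'m" 1] unfolding compact_def by meson
    have lb: "S (s (r1 (r2 n))) > exp (- B)" for n
    proof -
      have "F (s (r1 (r2 n))) < B" by (rule r1(2))
      then have "- ln (S (s (r1 (r2 n)))) < B" using F_on_sphere s by simp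
      then have "exp (- B) < exp (ln (S (s (r1 (r2 n)))))" by simp
      then show ?thesis using exp_ln[OF S_pos] s by simp
    qed
    have "((\<lambda>n. S (s (r1 (r2 n)))) \<longlongrightarrow> S w) sequentially"
      using continuous_on_tendsto_compose[OF S_cont w(3)] by (simp add: o_def)
    then have "S w \<ge> exp (- B)"
      using lb by (intro tendsto_lowerbound[of _ _ sequentially]) (auto intro: less_imp_le always_eventually)
    then have "S w > 0" by (meson exp_gt_zero less_le_trans)
    then have "w \<in> U" using w(1) S_pos_iff U_iff by auto
    moreover have "strict_mono (r1 \<circ> r2)" using r1(1) w(2) by (simp add: strict_mono_o)
    moreover have "(s \<circ> (r1 \<circ> r2)) \<longlonglongrightarrow> w" using w(3) by (simp add: o_assoc)
    ultimately show False using nacc by blast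
  qed
  show ?thesis unfolding proj_exhaustion_def using cont below proper by blast
qed

end


lemma RC_dd:
  assumes U: "open U" and f: "f \<in> RC U"
  shows "\<And>x. x \<in> U \<Longrightarrow> (f has_derivative (\<lambda>v. dderiv f v x)) (at x)"
    and "\<And>z u. z \<in> U \<Longrightarrow> (dderiv f u has_derivative (\<lambda>v. dderiv (dderiv f u) v z)) (at z)"
proof -
  obtain f' where f': "\<forall>x\<in>U. (f has_derivative f' x) (at x)" "\<forall>u. (\<lambda>x. f' x u) \<in> RC U"
    using RC_deriv[OF f] by blast
  have dd: "dderiv f v x = f' x v" if "x \<in> U" for x v
    unfolding dderiv_def using frechet_derivative_at[OF f'(1)[rule_format, OF that]] by simp
  show "(f has_derivative (\<lambda>v. dderiv f v x)) (at x)" if "x \<in> U" for x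
    using f'(1) that dd by (simp add: dd[OF that])
  show "(dderiv f u has_derivative (\<lambda>v. dderiv (dderiv f u) v z)) (at z)" if z: "z \<in> U" for z u
  proof -
    obtain g' where g': "\<forall>x\<in>U. ((\<lambda>x. f' x u) has_derivative g' x) (at x)"
      using RC_deriv[OF f'(2)[rule_format, of u]] by blast
    have eq: "\<And>x. x \<in> U \<Longrightarrow> f' x u = dderiv f u x" using dd by simp
    have "(dderiv f u has_derivative g' z) (at z)"
      by (rule has_derivative_transform_within_open[OF g'[rule_format, OF z] U z eq])
    moreover then have "frechet_derivative (dderiv f u) (at z) = g' z"
      using frechet_derivative_at by metis
    ultimately show ?thesis unfolding dderiv_def[of "dderiv f u"] by simp
  qed
qed

lemma RC_bilinear:
  assumes U: "open U" and f: "f \<in> RC U" and z: "z \<in> U"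
  shows "bilinear (\<lambda>u v. dderiv (dderiv f u) v z)"
proof -
  note d1 = RC_dd(1)[OF U f] and d2 = RC_dd(2)[OF U f]
  have lin1: "linear (\<lambda>v. dderiv f v x)" if "x \<in> U" for x
    using has_derivative_linear[OF d1[OF that]] .
  have lin2: "linear (\<lambda>v. dderiv (dderiv f u) v z)" for u
    using has_derivative_linear[OF d2[OF z]] .
  have add: "dderiv (dderiv f (u1 + u2)) v z = dderiv (dderiv f u1) v z + dderiv (dderiv f u2) v z" for u1 u2 v
  proof -
    have eq: "\<And>x. x \<in> U \<Longrightarrow> dderiv f u1 x + dderiv f u2 x = dderiv f (u1 + u2) x"
      subgoal for x using linear_add[OF lin1, of x u1 u2] by simp done
    have "(dderiv f (u1 + u2) has_derivative (\<lambda>v. dderiv (dderiv f u1) v z + dderiv (dderiv f u2) v z)) (at z)"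
      by (rule has_derivative_transform_within_open[OF has_derivative_add[OF d2[OF z] d2[OF z]] U z eq])
    from has_derivative_unique[OF d2[OF z] this] show ?thesis by meson
  qed
  have scale: "dderiv (dderiv f (a *\<^sub>R u)) v z = a *\<^sub>R dderiv (dderiv f u) v z" for a u v
  proof -
    have eq: "\<And>x. x \<in> U \<Longrightarrow> a * dderiv f u x = dderiv f (a *\<^sub>R u) x"
      subgoal for x using linear_scale[OF lin1, of x a u] by simp done
    have "(dderiv f (a *\<^sub>R u) has_derivative (\<lambda>v. a * dderiv (dderiv f u) v z)) (at z)"
      by (rule has_derivative_transform_within_open[OF has_derivative_mult_right[OF d2[OF z]] U z eq])
    from has_derivative_unique[OF d2[OF z] this] show ?thesis by simp meson
  qed
  show ?thesis unfolding bilinear_def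
    using lin2 add scale by (auto intro!: linearI)
qed

lemma RC_second:
  assumes U: "open U" and f: "f \<in> RC U" and z: "z \<in> U" and r: "r > 0"
    and ball: "\<And>t. \<bar>t\<bar> < r \<Longrightarrow> z + t *\<^sub>R u \<in> U"
    and psi: "\<And>t. \<bar>t\<bar> < r \<Longrightarrow> ((\<lambda>t. f (z + t *\<^sub>R u)) has_real_derivative psi t) (at t)"
    and c: "(psi has_real_derivative c) (at 0)"
  shows "dderiv (dderiv f u) u z = c"
proof -
  note d1 = RC_dd(1)[OF U f] and d2 = RC_dd(2)[OF U f]
  have lin1: "linear (\<lambda>v. dderiv f v x)" if "x \<in> U" for x
    using has_derivative_linear[OF d1[OF that]] .
  have lin2: "linear (\<lambda>v. dderiv (dderiv f u) v z)"
    using has_derivative_linear[OF d2[OF z]] .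
  have line: "((\<lambda>t. z + t *\<^sub>R u) has_derivative (\<lambda>s. s *\<^sub>R u)) (at t)" for t
    by (auto intro!: derivative_eq_intros)
  have eqpsi: "psi t = dderiv f u (z + t *\<^sub>R u)" if t: "\<bar>t\<bar> < r" for t
  proof -
    have "((\<lambda>t. f (z + t *\<^sub>R u)) has_derivative (\<lambda>s. dderiv f (s *\<^sub>R u) (z + t *\<^sub>R u))) (at t)"
      using has_derivative_compose[OF line d1[OF ball[OF t]]] by (simp add: o_def)
    moreover have "(\<lambda>s. dderiv f (s *\<^sub>R u) (z + t *\<^sub>R u)) = (\<lambda>s. dderiv f u (z + t *\<^sub>R u) * s)"
      using linear_scale[OF lin1[OF ball[OF t]]] by (simp add: mult.commute)
    ultimately have "((\<lambda>t. f (z + t *\<^sub>R u)) has_real_derivative dderiv f u (z + t *\<^sub>R u)) (at t)"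
      unfolding has_field_derivative_def by simp
    then show ?thesis using DERIV_unique psi[OF t] by blast
  qed
  have "((\<lambda>t. dderiv f u (z + t *\<^sub>R u)) has_derivative (\<lambda>s. dderiv (dderiv f u) (s *\<^sub>R u) z)) (at 0)"
  proof -
    have "(dderiv f u has_derivative (\<lambda>v. dderiv (dderiv f u) v z)) (at (z + 0 *\<^sub>R u))"
      using d2[OF z] by simp
    from has_derivative_compose[OF line[of 0] this] show ?thesis by (simp add: o_def)
  qed
  moreover have "(\<lambda>s. dderiv (dderiv f u) (s *\<^sub>R u) z) = (\<lambda>s. dderiv (dderiv f u) u z * s)"
    using linear_scale[OF lin2] by (simp add: mult.commute)
  ultimately have A: "((\<lambda>t. dderiv f u (z + t *\<^sub>R u)) has_real_derivative dderiv (dderiv f u) u z) (at 0)"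
    unfolding has_field_derivative_def by simp
  have B: "\<And>t. t \<in> ball 0 r \<Longrightarrow> dderiv f u (z + t *\<^sub>R u) = psi t"
    using eqpsi by (simp add: dist_norm)
  have "(psi has_real_derivative dderiv (dderiv f u) u z) (at 0)"
    by (rule has_field_derivative_transform_within_open[OF A open_ball centre_in_ball[THEN iffD2, OF r] B])
  then show ?thesis using DERIV_unique c by blast
qed



lemma vec_decomp:
  fixes w :: "complex^'m"
  shows "w = (\<Sum>j\<in>UNIV. Re (w$j) *\<^sub>R axis j 1 + Im (w$j) *\<^sub>R axis j \<i>)"
    and "\<i> *s w = (\<Sum>j\<in>UNIV. (- Im (w$j)) *\<^sub>R axis j 1 + Re (w$j) *\<^sub>R axis j \<i>)"
proof -
  have ax: "axis j c $ i = (if i = j then c else 0)" for j i and c :: complex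
    unfolding axis_def by simp
  have c1: "(Re (w$j) *\<^sub>R axis j 1 + Im (w$j) *\<^sub>R axis j \<i>) $ i = (if i = j then w $ j else 0)" for i j
    by (simp add: ax complex_eq_iff)
  have c2: "((- Im (w$j)) *\<^sub>R axis j 1 + Re (w$j) *\<^sub>R axis j \<i>) $ i = (if i = j then \<i> * w $ j else 0)" for i j
    by (simp add: ax complex_eq_iff)
  show "w = (\<Sum>j\<in>UNIV. Re (w$j) *\<^sub>R axis j 1 + Im (w$j) *\<^sub>R axis j \<i>)"
    unfolding vec_eq_iff sum_component c1 by (simp add: sum.delta')
  show "\<i> *s w = (\<Sum>j\<in>UNIV. (- Im (w$j)) *\<^sub>R axis j 1 + Re (w$j) *\<^sub>R axis j \<i>)"
    unfolding vec_eq_iff sum_component c2 by (simp add: sum.delta')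
qed

lemma levi_re:
  fixes f :: "complex^'m \<Rightarrow> real"
  assumes b: "bilinear (\<lambda>u v. dderiv (dderiv f u) v z)"
  shows "Re (levi_form f z w) = (dderiv (dderiv f w) w z + dderiv (dderiv f (\<i> *s w)) (\<i> *s w) z) / 4"
proof -
  define h where "h = (\<lambda>u v. dderiv (dderiv f u) v z)"
  have b': "bilinear h" using b unfolding h_def .
  define W where "W j = Re (w$j) *\<^sub>R axis j (1::complex) + Im (w$j) *\<^sub>R axis j \<i>" for j
  define W' where "W' j = (- Im (w$j)) *\<^sub>R axis j (1::complex) + Re (w$j) *\<^sub>R axis j \<i>" for j
  have w1: "w = sum W UNIV" unfolding W_def by (rule vec_decomp(1))
  have w2: "\<i> *s w = sum W' UNIV" unfolding W'_def by (rule vec_decomp(2))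
  have tm: "4 * Re (wirt2 f i j z * w$i * cnj (w$j)) = h (W j) (W i) + h (W' j) (W' i)" for i j
  proof -
    have ex: "h (a *\<^sub>R x + b *\<^sub>R y) (c *\<^sub>R x' + d *\<^sub>R y') = a*c*h x x' + a*d*h x y' + b*c*h y x' + b*d*h y y'" for a b c d x y x' y'
      by (simp add: bilinear_ladd[OF b'] bilinear_radd[OF b'] bilinear_lmul[OF b'] bilinear_rmul[OF b'] algebra_simps)
    show ?thesis unfolding W_def W'_def ex
      by (simp add: wirt2_def h_def field_simps)
  qed
  have "h w w + h (\<i> *s w) (\<i> *s w) = (\<Sum>j\<in>UNIV. \<Sum>i\<in>UNIV. h (W j) (W i) + h (W' j) (W' i))"
  proof -
    have A: "h (sum W UNIV) (sum W UNIV) = (\<Sum>j\<in>UNIV. \<Sum>i\<in>UNIV. h (W j) (W i))"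
      unfolding bilinear_sum[OF b'] sum.cartesian_product[symmetric] by simp
    have B: "h (sum W' UNIV) (sum W' UNIV) = (\<Sum>j\<in>UNIV. \<Sum>i\<in>UNIV. h (W' j) (W' i))"
      unfolding bilinear_sum[OF b'] sum.cartesian_product[symmetric] by simp
    show ?thesis unfolding sum.distrib A[folded w1] B[folded w2] ..
  qed
  also have "\<dots> = (\<Sum>i\<in>UNIV. \<Sum>j\<in>UNIV. 4 * Re (wirt2 f i j z * w$i * cnj (w$j)))"
    unfolding tm by (rule sum.swap)
  also have "\<dots> = 4 * Re (levi_form f z w)"
    unfolding levi_form_def by (simp add: sum_distrib_left)
  finally show ?thesis unfolding h_def by simp
qed



definition clin :: "(complex^'m \<Rightarrow> complex) \<Rightarrow> bool" where
  "clin L = ((\<forall>x y. L (x + y) = L x + L y) \<and> (\<forall>c x. L (c *s x) = c * L x))"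

lemma clin_ker_subspace: "clin L \<Longrightarrow> vec.subspace {w. L w = 0}"
proof (intro vec.subspaceI)
  assume L: "clin L"
  have "L 0 = L 0 + L 0" using L unfolding clin_def by (metis add_0)
  then show "0 \<in> {w. L w = 0}" by simp
  show "x + y \<in> {w. L w = 0}" if "x \<in> {w. L w = 0}" "y \<in> {w. L w = 0}" for x y
    using L that unfolding clin_def by simp
  show "c *s x \<in> {w. L w = 0}" if "x \<in> {w. L w = 0}" for c x
    using L that unfolding clin_def by simp
qed

lemma ker_dim:
  fixes V :: "(complex^'m) set"
  assumes V: "vec.subspace V" and L: "clin L"
  shows "vec.dim V \<le> vec.dim (V \<inter> {w. L w = 0}) + 1"
proof (cases "\<forall>v\<in>V. L v = 0")
  case True
  then have "V \<inter> {w. L w = 0} = V" by auto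
  then show ?thesis by simp
next
  case False
  then obtain v0 where v0: "v0 \<in> V" "L v0 \<noteq> 0" by blast
  obtain B where B: "B \<subseteq> V \<inter> {w. L w = 0}" "vec.independent B" "V \<inter> {w. L w = 0} \<subseteq> vec.span B"
    "card B = vec.dim (V \<inter> {w. L w = 0})"
    using vec.basis_exists by blast
  have fin: "finite B" using B(2) vec.finiteI_independent by blast
  have "V \<subseteq> vec.span (insert v0 B)"
  proof
    fix v assume v: "v \<in> V"
    define c where "c = L v / L v0"
    have "v - c *s v0 \<in> V" using vec.subspace_diff[OF V v vec.subspace_scale[OF V v0(1)]] .
    moreover have "L (v - c *s v0) = 0"
    proof -
      have "L v = L ((v - c *s v0) + c *s v0)" by simp
      also have "\<dots> = L (v - c *s v0) + L (c *s v0)" using L unfolding clin_def by blast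
      finally have "L v = L (v - c *s v0) + L (c *s v0)" .
      then show ?thesis using L v0(2) unfolding clin_def c_def by simp
    qed
    ultimately have "v - c *s v0 \<in> vec.span B" using B(3) by blast
    then show "v \<in> vec.span (insert v0 B)" using vec.span_breakdown_eq by blast
  qed
  then have "vec.dim V \<le> card (insert v0 B)" using vec.dim_le_card fin by blast
  also have "\<dots> \<le> card B + 1" by (simp add: card_insert_if fin)
  finally show ?thesis using B(4) by simp
qed

lemma ker_many:
  fixes Ls :: "nat \<Rightarrow> complex^'m \<Rightarrow> complex"
  assumes "\<And>i. i < j \<Longrightarrow> clin (Ls i)"
  shows "vec.subspace {w. \<forall>i<j. Ls i w = 0} \<and> CARD('m) - j \<le> vec.dim {w. \<forall>i<j. Ls i w = 0}"
  using assms
proof (induction j)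
  case 0
  then show ?case using vec_dim_card[where 'a=complex and 'n='m] by simp
next
  case (Suc j)
  let ?V = "{w::complex^'m. \<forall>i<j. Ls i w = 0}"
  have IH: "vec.subspace ?V" "CARD('m) - j \<le> vec.dim ?V" using Suc by auto
  have eq: "{w. \<forall>i<Suc j. Ls i w = 0} = ?V \<inter> {w. Ls j w = 0}" by (auto simp: less_Suc_eq)
  have cl: "clin (Ls j)" using Suc by auto
  have "vec.subspace {w. \<forall>i<Suc j. Ls i w = 0}"
    unfolding eq using IH(1) clin_ker_subspace[OF cl] by (rule vec.subspace_inter)
  moreover have "vec.dim ?V \<le> vec.dim {w. \<forall>i<Suc j. Ls i w = 0} + 1"
    unfolding eq by (rule ker_dim[OF IH(1) cl])
  ultimately show ?case using IH(2) by linarith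
qed

lemma sub_dim:
  fixes V :: "(complex^'m) set"
  assumes V: "vec.subspace V" and l: "l \<le> vec.dim V"
  shows "\<exists>E. vec.subspace E \<and> E \<subseteq> V \<and> vec.dim E = l"
proof -
  obtain B where B: "B \<subseteq> V" "vec.independent B" "V \<subseteq> vec.span B" "card B = vec.dim V"
    using vec.basis_exists by blast
  obtain B' where B': "B' \<subseteq> B" "card B' = l" using obtain_subset_with_card_n[of l B] l B(4) by auto
  have ind: "vec.independent B'" using B(2) B'(1) vec.independent_mono by blast
  have "B' \<subseteq> V" using B(1) B'(1) by blast
  then have "vec.span B' \<subseteq> V" using V by (rule vec.span_minimal)
  moreover have "vec.dim (vec.span B') = l" using vec.dim_span_eq_card_independent[OF ind] B'(2) by simp
  ultimately show ?thesis by (intro exI[of _ "vec.span B'"]) auto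
qed



lemma ln_second:
  fixes n :: "real \<Rightarrow> real"
  assumes r: "r > 0" and d1: "\<And>t. \<bar>t\<bar> < r \<Longrightarrow> (n has_real_derivative n1 t) (at t)"
    and d2: "(n1 has_real_derivative n2) (at 0)" and pos: "\<And>t. \<bar>t\<bar> < r \<Longrightarrow> n t > 0"
  shows "\<And>t. \<bar>t\<bar> < r \<Longrightarrow> ((\<lambda>t. ln (n t)) has_real_derivative n1 t / n t) (at t)"
    and "((\<lambda>t. n1 t / n t) has_real_derivative (n2 * n 0 - n1 0 * n1 0) / (n 0)\<^sup>2) (at 0)"
proof -
  show "((\<lambda>t. ln (n t)) has_real_derivative n1 t / n t) (at t)" if t: "\<bar>t\<bar> < r" for t
    using DERIV_chain2[OF DERIV_ln[OF pos[OF t]] d1[OF t]] by (simp add: divide_inverse mult.commute)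
  have "n 0 \<noteq> 0" using pos[of 0] r by simp
  from DERIV_quotient[OF d2 d1[of 0] this] r show "((\<lambda>t. n1 t / n t) has_real_derivative (n2 * n 0 - n1 0 * n1 0) / (n 0)\<^sup>2) (at 0)"
    by (simp add: power2_eq_square mult.commute)
qed

lemma modsq_deriv:
  fixes g :: "complex \<Rightarrow> complex"
  assumes hol: "g holomorphic_on UNIV"
  shows "((\<lambda>t::real. (Re (g (of_real t)))\<^sup>2 + (Im (g (of_real t)))\<^sup>2) has_real_derivative
            2 * (Re (g (of_real t)) * Re (deriv g (of_real t)) + Im (g (of_real t)) * Im (deriv g (of_real t)))) (at t)"
    and "((\<lambda>t::real. 2 * (Re (g (of_real t)) * Re (deriv g (of_real t)) + Im (g (of_real t)) * Im (deriv g (of_real t))))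
           has_real_derivative
            2 * ((Re (deriv g 0))\<^sup>2 + (Im (deriv g 0))\<^sup>2 + Re (g 0) * Re (deriv (deriv g) 0) + Im (g 0) * Im (deriv (deriv g) 0))) (at 0)"
proof -
  have hol': "deriv g holomorphic_on UNIV" using holomorphic_deriv[OF hol] by simp
  have g1: "((\<lambda>t. g (of_real t)) has_vector_derivative deriv g (of_real t)) (at t)" for t :: real
    by (rule has_vector_derivative_real_field) (rule holomorphic_derivI[OF hol open_UNIV UNIV_I])
  have g2: "((\<lambda>t. deriv g (of_real t)) has_vector_derivative deriv (deriv g) (of_real t)) (at t)" for t :: real
    by (rule has_vector_derivative_real_field) (rule holomorphic_derivI[OF hol' open_UNIV UNIV_I])
  note R1 = has_field_derivative_Re[OF g1] and I1 = has_field_derivative_Im[OF g1]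
  note R2 = has_field_derivative_Re[OF g2] and I2 = has_field_derivative_Im[OF g2]
  show "((\<lambda>t::real. (Re (g (of_real t)))\<^sup>2 + (Im (g (of_real t)))\<^sup>2) has_real_derivative
            2 * (Re (g (of_real t)) * Re (deriv g (of_real t)) + Im (g (of_real t)) * Im (deriv g (of_real t)))) (at t)"
    unfolding power2_eq_square
    by (rule derivative_eq_intros R1 I1 refl | simp add: algebra_simps)+
  show "((\<lambda>t::real. 2 * (Re (g (of_real t)) * Re (deriv g (of_real t)) + Im (g (of_real t)) * Im (deriv g (of_real t))))
           has_real_derivative
            2 * ((Re (deriv g 0))\<^sup>2 + (Im (deriv g 0))\<^sup>2 + Re (g 0) * Re (deriv (deriv g) 0) + Im (g 0) * Im (deriv (deriv g) 0))) (at 0)"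
  proof -
    have a: "((\<lambda>t. g (of_real t)) has_vector_derivative deriv g 0) (at (0::real))" using g1[of 0] by simp
    have b: "((\<lambda>t. deriv g (of_real t)) has_vector_derivative deriv (deriv g) 0) (at (0::real))" using g2[of 0] by simp
    show ?thesis
      by (rule derivative_eq_intros a b refl | simp add: power2_eq_square algebra_simps)+
  qed
qed



context cone_setup begin

definition "Ls z i w = deriv (\<lambda>\<tau>. Q i (z + \<tau> *s w)) 0"
definition "G2 z i w = deriv (deriv (\<lambda>\<tau>. Q i (z + \<tau> *s w))) 0"

lemma line_holo: "i < k \<Longrightarrow> (\<lambda>\<tau>. Q i (z + \<tau> *s w)) holomorphic_on UNIV"
  using CP_line_holo[OF Q_CP] by blast

lemma Ls_clin: assumes i: "i < k" shows "clin (Ls z i)"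
proof -
  obtain L where L: "(Q i has_derivative L) (at z)" "\<forall>c h. L (c *s h) = c * L h"
    using CP_deriv[OF Q_CP[OF i]] by blast
  have "Ls z i w = L w" for w
  proof -
    have line: "((\<lambda>\<tau>::complex. z + \<tau> *s w) has_derivative (\<lambda>\<tau>. \<tau> *s w)) (at 0)"
    proof -
      have "bounded_linear (\<lambda>\<tau>::complex. \<tau> *s w)"
      proof (rule bounded_linear_intro[where K = "norm w"])
        show "(x + y) *s w = x *s w + y *s w" for x y by (simp add: vec_eq_iff algebra_simps)
        show "(r *\<^sub>R x) *s w = r *\<^sub>R (x *s w)" for r x
          unfolding vec_eq_iff vector_scaleR_component vector_smult_component by (simp add: scaleR_conv_of_real)
        show "norm (x *s w) \<le> norm x * norm w" for x by (simp add: norm_smult_vec)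
      qed
      then show ?thesis by (auto intro!: derivative_eq_intros bounded_linear_imp_has_derivative)
    qed
    have "(Q i has_derivative L) (at (z + 0 *s w))" using L(1) by simp
    from has_derivative_compose[OF line this] have "((\<lambda>\<tau>. Q i (z + \<tau> *s w)) has_derivative (\<lambda>\<tau>. \<tau> * L w)) (at 0)"
      using L(2) by (simp add: o_def)
    then have "((\<lambda>\<tau>. Q i (z + \<tau> *s w)) has_field_derivative L w) (at 0)"
      unfolding has_field_derivative_def by (simp add: mult.commute[of _ "L w"])
    then show ?thesis unfolding Ls_def by (rule DERIV_imp_deriv)
  qed
  moreover have "L (x + y) = L x + L y" for x y using linear_add[OF has_derivative_linear[OF L(1)]] .
  ultimately show ?thesis unfolding clin_def using L(2) by simp
qed

lemma Ls_euler: assumes i: "i < k" shows "Ls z i z = of_nat DD * Q i z"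
proof -
  have eq: "Q i (z + \<tau> *s z) = (1 + \<tau>) ^ DD * Q i z" for \<tau>
  proof -
    have "z + \<tau> *s z = (1 + \<tau>) *s z" by (simp add: vec_eq_iff algebra_simps)
    then have "Q i (z + \<tau> *s z) = Q i ((1 + \<tau>) *s z)" by (simp only:)
    also have "\<dots> = (1 + \<tau>) ^ DD * Q i z" by (rule Q_homog[OF i])
    finally show ?thesis .
  qed
  have "((\<lambda>\<tau>. (1 + \<tau>) ^ DD * Q i z) has_field_derivative of_nat DD * Q i z) (at 0)"
    by (auto intro!: derivative_eq_intros)
  then show ?thesis unfolding Ls_def eq by (rule DERIV_imp_deriv)
qed

lemma G2_i: assumes i: "i < k" shows "G2 z i (\<i> *s u) = - G2 z i u"
proof -
  define g where "g = (\<lambda>\<tau>. Q i (z + \<tau> *s u))"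
  have hol: "g holomorphic_on UNIV" unfolding g_def by (rule line_holo[OF i])
  have hol': "deriv g holomorphic_on UNIV" using holomorphic_deriv[OF hol] by simp
  have eq: "(\<lambda>\<tau>. Q i (z + \<tau> *s (\<i> *s u))) = (\<lambda>\<tau>. g (\<i> * \<tau>))"
    unfolding g_def by (simp add: vector_smult_assoc mult.commute)
  have d1: "deriv (\<lambda>\<tau>. g (\<i> * \<tau>)) = (\<lambda>\<tau>. \<i> * deriv g (\<i> * \<tau>))"
  proof
    fix \<tau>
    have "((\<lambda>\<tau>. g (\<i> * \<tau>)) has_field_derivative deriv g (\<i> * \<tau>) * \<i>) (at \<tau>)"
      using DERIV_chain2[OF holomorphic_derivI[OF hol open_UNIV UNIV_I] DERIV_cmult[OF DERIV_ident, of \<i>]] by simp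
    then show "deriv (\<lambda>\<tau>. g (\<i> * \<tau>)) \<tau> = \<i> * deriv g (\<i> * \<tau>)"
      by (simp add: DERIV_imp_deriv mult.commute)
  qed
  note X = DERIV_cmult[OF DERIV_chain2[OF holomorphic_derivI[OF hol' open_UNIV UNIV_I] DERIV_cmult[OF DERIV_ident, of \<i>]], of \<i>]
  have "((\<lambda>\<tau>. \<i> * deriv g (\<i> * \<tau>)) has_field_derivative \<i> * (deriv (deriv g) (\<i> * 0) * (\<i> * 1))) (at 0)"
    by (rule X)
  moreover have "\<i> * (deriv (deriv g) 0 * \<i>) = - deriv (deriv g) 0" by (simp add: complex_eq_iff)
  ultimately have "deriv (\<lambda>\<tau>. \<i> * deriv g (\<i> * \<tau>)) 0 = - deriv (deriv g) 0"
    by (simp add: DERIV_imp_deriv)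
  then show ?thesis unfolding G2_def eq d1 by (simp add: g_def)
qed

end


context cone_setup begin

lemma H_formula:
  assumes z: "z \<in> U" and ker: "\<forall>i<k. Ls z i u = 0"
  shows "dderiv (dderiv F u) u z =
    real DD * ((2 * (u \<bullet> u)) * N z - (2 * (z \<bullet> u)) * (2 * (z \<bullet> u))) / (N z)\<^sup>2
    - (\<Sum>i<k. 2 * (Re (Q i z) * Re (G2 z i u) + Im (Q i z) * Im (G2 z i u))) / S z"
proof -
  obtain r0 where r0: "r0 > 0" "ball z r0 \<subseteq> U" using U_open z open_contains_ball by blast
  define r where "r = r0 / (norm u + 1)"
  have np: "norm u + 1 > 0" using norm_ge_zero[of u] by linarith
  have r: "r > 0" unfolding r_def using r0(1) np by (rule divide_pos_pos)
  have inU: "z + t *\<^sub>R u \<in> U" if t: "\<bar>t\<bar> < r" for t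
  proof -
    have "norm (t *\<^sub>R u) = \<bar>t\<bar> * norm u" by simp
    also have "\<dots> \<le> \<bar>t\<bar> * (norm u + 1)" by (simp add: mult_left_mono)
    also have "\<dots> < r * (norm u + 1)" using t np by (simp add: mult_strict_right_mono)
    also have "\<dots> = r0" unfolding r_def using np by simp
    finally have "dist z (z + t *\<^sub>R u) < r0" by (simp add: dist_norm)
    then show ?thesis using r0(2) by auto
  qed
  define n where "n t = N (z + t *\<^sub>R u)" for t
  define n1 where "n1 t = 2 * (z \<bullet> u) + 2 * t * (u \<bullet> u)" for t
  have n_eq: "n t = z \<bullet> z + 2 * t * (z \<bullet> u) + t\<^sup>2 * (u \<bullet> u)" for t
    unfolding n_def N_norm power2_norm_eq_inner by (simp add: inner_add_left inner_add_right inner_commute algebra_simps power2_eq_square)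
  have nd1: "(n has_real_derivative n1 t) (at t)" for t
    unfolding n_eq[abs_def] n1_def by (auto intro!: derivative_eq_intros simp: algebra_simps)
  have nd2: "(n1 has_real_derivative 2 * (u \<bullet> u)) (at 0)"
    unfolding n1_def[abs_def] by (auto intro!: derivative_eq_intros)
  have npos: "n t > 0" if "\<bar>t\<bar> < r" for t unfolding n_def using N_pos inU that by blast
  define g where "g i = (\<lambda>\<tau>. Q i (z + \<tau> *s u))" for i
  have hol: "i < k \<Longrightarrow> g i holomorphic_on UNIV" for i unfolding g_def by (rule line_holo)
  define s where "s t = S (z + t *\<^sub>R u)" for t
  define s1 where "s1 t = (\<Sum>i<k. 2 * (Re (g i (of_real t)) * Re (deriv (g i) (of_real t)) + Im (g i (of_real t)) * Im (deriv (g i) (of_real t))))" for t :: real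
  define s2 where "s2 = (\<Sum>i<k. 2 * ((Re (deriv (g i) 0))\<^sup>2 + (Im (deriv (g i) 0))\<^sup>2 + Re (g i 0) * Re (deriv (deriv (g i)) 0) + Im (g i 0) * Im (deriv (deriv (g i)) 0)))"
  have zt: "z + t *\<^sub>R u = z + of_real t *s u" for t :: real
    unfolding vec_eq_iff vector_add_component vector_scaleR_component vector_smult_component by (simp add: scaleR_conv_of_real)
  have s_eq: "s t = (\<Sum>i<k. (Re (g i (of_real t)))\<^sup>2 + (Im (g i (of_real t)))\<^sup>2)" for t
    unfolding s_def S_def g_def zt by (simp add: cmod_power2)
  have sd1: "(s has_real_derivative s1 t) (at t)" for t
    unfolding s_eq[abs_def] s1_def by (rule DERIV_sum) (rule modsq_deriv(1)[OF hol], simp)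
  have sd2: "(s1 has_real_derivative s2) (at 0)"
    unfolding s1_def[abs_def] s2_def by (rule DERIV_sum) (rule modsq_deriv(2)[OF hol], simp)
  have spos: "s t > 0" if "\<bar>t\<bar> < r" for t unfolding s_def using S_pos inU that by blast
  define psi where "psi t = real DD * (n1 t / n t) - s1 t / s t" for t
  have Feq: "F (z + t *\<^sub>R u) = real DD * ln (n t) - ln (s t)" for t unfolding F_def n_def s_def ..
  have psid: "((\<lambda>t. F (z + t *\<^sub>R u)) has_real_derivative psi t) (at t)" if t: "\<bar>t\<bar> < r" for t
    unfolding Feq psi_def
    by (intro DERIV_diff DERIV_cmult ln_second(1)[OF r nd1 nd2 npos t] ln_second(1)[OF r sd1 sd2 spos t])
  have psid0: "(psi has_real_derivative real DD * ((2 * (u \<bullet> u) * n 0 - n1 0 * n1 0) / (n 0)\<^sup>2) - (s2 * s 0 - s1 0 * s1 0) / (s 0)\<^sup>2) (at 0)"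
    unfolding psi_def[abs_def]
    by (intro DERIV_diff DERIV_cmult ln_second(2)[OF r nd1 nd2 npos] ln_second(2)[OF r sd1 sd2 spos])
  have H: "dderiv (dderiv F u) u z = real DD * ((2 * (u \<bullet> u) * n 0 - n1 0 * n1 0) / (n 0)\<^sup>2) - (s2 * s 0 - s1 0 * s1 0) / (s 0)\<^sup>2"
    by (rule RC_second[OF U_open F_RC z r inU psid psid0])
  have g1: "deriv (g i) 0 = 0" if "i < k" for i using ker that unfolding Ls_def g_def by simp
  have s10: "s1 0 = 0" unfolding s1_def using g1 by simp
  have s2eq: "s2 = (\<Sum>i<k. 2 * (Re (Q i z) * Re (G2 z i u) + Im (Q i z) * Im (G2 z i u)))"
    unfolding s2_def G2_def g_def[symmetric] using g1 by (intro sum.cong) (auto simp: g_def)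
  have n0: "n 0 = N z" "s 0 = S z" "n1 0 = 2 * (z \<bullet> u)" unfolding n_def s_def n1_def by simp_all
  have "S z > 0" using S_pos z by blast
  then show ?thesis unfolding H s10 n0 s2eq by (simp add: power2_eq_square)
qed

end


lemma inner_i_self: "(w::complex^'m) \<bullet> (\<i> *s w) = 0"
  unfolding inner_vec_def by (simp add: inner_complex_def)

lemma inner_i_i: "(\<i> *s w) \<bullet> (\<i> *s (w::complex^'m)) = w \<bullet> w"
  unfolding inner_vec_def by (simp add: inner_complex_def add.commute)

lemma key_ineq:
  fixes z w :: "complex^'m"
  assumes z: "z \<noteq> 0" and w: "w \<noteq> 0" and nm: "\<And>c. w \<noteq> c *s z"
  shows "(z \<bullet> w)\<^sup>2 + (z \<bullet> (\<i> *s w))\<^sup>2 < (w \<bullet> w) * (z \<bullet> z)"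
proof -
  define a where "a = z \<bullet> w"
  define b where "b = z \<bullet> (\<i> *s w)"
  define v where "v = a *\<^sub>R w + b *\<^sub>R (\<i> *s w)"
  have zz: "z \<bullet> z > 0" using z by simp
  have ww: "w \<bullet> w > 0" using w by simp
  have zv: "z \<bullet> v = a\<^sup>2 + b\<^sup>2" unfolding v_def a_def b_def by (simp add: inner_add_right power2_eq_square)
  have vv: "v \<bullet> v = (a\<^sup>2 + b\<^sup>2) * (w \<bullet> w)"
    unfolding v_def by (simp add: inner_add_left inner_add_right inner_i_self inner_i_i inner_commute[of "\<i> *s w" w] power2_eq_square algebra_simps)
  show ?thesis
  proof (cases "a\<^sup>2 + b\<^sup>2 = 0")
    case True
    then show ?thesis unfolding a_def b_def using zz ww by simp
  next
    case False
    then have p: "a\<^sup>2 + b\<^sup>2 > 0" by (simp add: add_pos_nonneg order_le_neq_trans[OF add_nonneg_nonneg[OF zero_le_power2 zero_le_power2]] del: sum_power2_eq_zero_iff)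
    have cs: "(z \<bullet> v)\<^sup>2 \<le> (z \<bullet> z) * (v \<bullet> v)" by (rule Cauchy_Schwarz_ineq)
    then have "(a\<^sup>2 + b\<^sup>2) * (a\<^sup>2 + b\<^sup>2) \<le> (a\<^sup>2 + b\<^sup>2) * ((z \<bullet> z) * (w \<bullet> w))"
      unfolding zv vv by (simp add: power2_eq_square algebra_simps)
    then have le: "a\<^sup>2 + b\<^sup>2 \<le> (z \<bullet> z) * (w \<bullet> w)" using p by simp
    have ne: "a\<^sup>2 + b\<^sup>2 \<noteq> (z \<bullet> z) * (w \<bullet> w)"
    proof
      assume eq: "a\<^sup>2 + b\<^sup>2 = (z \<bullet> z) * (w \<bullet> w)"
      have "(z \<bullet> v)\<^sup>2 = (z \<bullet> z) * (v \<bullet> v)" unfolding zv vv eq by (simp add: power2_eq_square algebra_simps)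
      then have "\<bar>z \<bullet> v\<bar> = norm z * norm v"
        by (metis abs_of_nonneg norm_ge_zero power2_norm_eq_inner power_mult_distrib real_sqrt_abs real_sqrt_unique mult_nonneg_nonneg)
      then have "norm z *\<^sub>R v = norm v *\<^sub>R z \<or> norm z *\<^sub>R v = - norm v *\<^sub>R z"
        using norm_cauchy_schwarz_abs_eq by blast
      then obtain \<mu> :: real where mu: "norm z *\<^sub>R v = \<mu> *\<^sub>R z" by (metis scaleR_minus_left)
      define c where "c = complex_of_real a + \<i> * complex_of_real b"
      have "c \<noteq> 0" using p unfolding c_def by (auto simp: complex_eq_iff)
      have v_c: "v = c *s w" unfolding v_def c_def
        unfolding vec_eq_iff vector_add_component vector_scaleR_component vector_smult_component
        by (simp add: scaleR_conv_of_real algebra_simps)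
      have "norm z \<noteq> 0" using z by simp
      have "w = (complex_of_real (\<mu> / norm z) / c) *s z"
      proof -
        have "v = (\<mu> / norm z) *\<^sub>R z" using mu \<open>norm z \<noteq> 0\<close>
          by (metis (no_types, lifting) divide_inverse_commute scaleR_scaleR inverse_eq_divide
              mult.commute right_inverse scaleR_one)
        then have "c *s w = complex_of_real (\<mu> / norm z) *s z"
          unfolding v_c vec_eq_iff vector_scaleR_component vector_smult_component
          by (simp add: scaleR_conv_of_real)
        then have "(inverse c) *s (c *s w) = (inverse c) *s (complex_of_real (\<mu> / norm z) *s z)" by simp
        then show ?thesis using \<open>c \<noteq> 0\<close> by (simp add: vector_smult_assoc divide_inverse mult.commute)
      qed
      then show False using nm by blast
    qed
    show ?thesis using le ne unfolding a_def b_def by (simp add: mult.commute)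
  qed
qed



context cone_setup begin

lemma F_psh: "strictly_psh (CARD('m) - k) U F"
  unfolding strictly_psh_def
proof
  fix z assume z: "z \<in> U"
  have cl: "\<And>i. i < k \<Longrightarrow> clin (Ls z i)" by (rule Ls_clin)
  have V: "vec.subspace {w. \<forall>i<k. Ls z i w = 0}" "CARD('m) - k \<le> vec.dim {w. \<forall>i<k. Ls z i w = 0}"
    using ker_many[of k "Ls z", OF cl] by auto
  obtain E where E: "vec.subspace E" "E \<subseteq> {w. \<forall>i<k. Ls z i w = 0}" "vec.dim E = CARD('m) - k"
    using sub_dim[OF V] by blast
  have pos: "Re (levi_form F z w) > 0" if wE: "w \<in> E" and w0: "w \<noteq> 0" for w
  proof -
    have ker1: "\<forall>i<k. Ls z i w = 0" using E(2) wE by blast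
    have ker2: "\<forall>i<k. Ls z i (\<i> *s w) = 0" using ker1 cl unfolding clin_def by simp
    have z0: "z \<noteq> 0" and ex: "\<exists>i<k. Q i z \<noteq> 0" using z U_iff by auto
    have nm: "w \<noteq> c *s z" for c
    proof
      assume wc: "w = c *s z"
      obtain i where i: "i < k" "Q i z \<noteq> 0" using ex by blast
      have "Ls z i w = c * (of_nat DD * Q i z)"
        unfolding wc using cl[OF i(1)] Ls_euler[OF i(1)] unfolding clin_def by simp
      then have "c * (of_nat DD * Q i z) = 0" using ker1 i(1) by simp
      moreover have "(of_nat DD :: complex) \<noteq> 0" using DD_pos by simp
      ultimately have "c = 0" using i(2) by simp
      then show False using wc w0 by simp
    qed
    define T where "T = (\<Sum>i<k. 2 * (Re (Q i z) * Re (G2 z i w) + Im (Q i z) * Im (G2 z i w)))"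
    have T2: "(\<Sum>i<k. 2 * (Re (Q i z) * Re (G2 z i (\<i> *s w)) + Im (Q i z) * Im (G2 z i (\<i> *s w)))) = - T"
      unfolding T_def sum_negf[symmetric] by (intro sum.cong) (auto simp: G2_i algebra_simps)
    have Hw: "dderiv (dderiv F w) w z = real DD * ((2 * (w \<bullet> w)) * N z - (2 * (z \<bullet> w)) * (2 * (z \<bullet> w))) / (N z)\<^sup>2 - T / S z"
      unfolding T_def by (rule H_formula[OF z ker1])
    have Hiw: "dderiv (dderiv F (\<i> *s w)) (\<i> *s w) z = real DD * ((2 * (w \<bullet> w)) * N z - (2 * (z \<bullet> (\<i> *s w))) * (2 * (z \<bullet> (\<i> *s w)))) / (N z)\<^sup>2 + T / S z"
      using H_formula[OF z ker2] unfolding T2 inner_i_i by simp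
    have lev: "Re (levi_form F z w) = (dderiv (dderiv F w) w z + dderiv (dderiv F (\<i> *s w)) (\<i> *s w) z) / 4"
      by (rule levi_re[OF RC_bilinear[OF U_open F_RC z]])
    have Nz: "N z = z \<bullet> z" unfolding N_norm power2_norm_eq_inner ..
    have Npos: "N z > 0" using N_pos z by blast
    have key: "(z \<bullet> w)\<^sup>2 + (z \<bullet> (\<i> *s w))\<^sup>2 < (w \<bullet> w) * (z \<bullet> z)"
      by (rule key_ineq[OF z0 w0 nm])
    have "Re (levi_form F z w) = real DD * (4 * ((w \<bullet> w) * N z - (z \<bullet> w)\<^sup>2 - (z \<bullet> (\<i> *s w))\<^sup>2)) / (N z)\<^sup>2 / 4"
      unfolding lev Hw Hiw using Npos by (simp add: field_simps power2_eq_square)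
    moreover have "(w \<bullet> w) * N z - (z \<bullet> w)\<^sup>2 - (z \<bullet> (\<i> *s w))\<^sup>2 > 0" using key Nz by simp
    moreover have "real DD > 0" using DD_pos by simp
    ultimately show ?thesis using Npos by simp
  qed
  show "\<exists>E. vec.subspace E \<and> vec.dim E = CARD('m) - k \<and> (\<forall>v\<in>E. v \<noteq> 0 \<longrightarrow> 0 < Re (levi_form F z v))"
    using E pos by blast
qed

end

theorem mainTheorem15:
  fixes P :: "nat \<Rightarrow> complex^'m \<Rightarrow> complex" and d :: "nat \<Rightarrow> nat" and k :: nat
  assumes "\<And>i. i < k \<Longrightarrow> d i \<ge> 1 \<and> homog_poly (d i) (P i)"
  shows "(\<exists>f. proj_invariant (compl_cone k P) f \<and> Ck 2 (compl_cone k P) f \<and>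
            strictly_psh (CARD('m) - k) (compl_cone k P) f \<and>
            proj_exhaustion (compl_cone k P) f)
       \<and> (k = 1 \<longrightarrow> (\<exists>f. proj_invariant (compl_cone k P) f \<and> smooth_fun (compl_cone k P) f \<and>
            strictly_psh (CARD('m) - 1) (compl_cone k P) f \<and>
            proj_exhaustion (compl_cone k P) f))"
proof -
  interpret cone_setup P d k using assms by unfold_locales
  have main: "proj_invariant (compl_cone k P) F \<and> smooth_fun (compl_cone k P) F \<and>
      strictly_psh (CARD('m) - k) (compl_cone k P) F \<and> proj_exhaustion (compl_cone k P) F"
    using F_proj_inv RC_smooth[OF U_open F_RC] F_psh F_exhaustion unfolding U_def by blast
  have "Ck 2 (compl_cone k P) F" using main unfolding smooth_fun_def by blast
  then show ?thesis using main by auto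
qed

end
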